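(* Fix $\varepsilon>0$. Under (C1)–(C4), for every $z\in\mathbb C\setminus\overline D$ the equations $1-\mathrm{tr}_nG(z,x^2)=\varepsilon/x$ and $1-\int(\lambda+x^2)^{-1}d\nu_z(\lambda)=\varepsilon/x$ each have exactly one positive root, while $\int(\lambda+x^2)^{-1}d\nu_z(\lambda)=1$ has no nonnegative root. Moreover, for every compact $E_{out}\subset\mathbb C\setminus\overline D$ there is $n_0=n_0(E_{out})$ such that for $n\ge n_0$ and $z\in E_{out}$ the equation $\mathrm{tr}_nG(z,x^2)=1$ has no nonnegative root.
   Context: $A_n$ is an $n\times n$ matrix (deterministic, or random and then statements hold almost surely for large $n$); $\mathrm{tr}_n=n^{-1}\mathrm{Tr}$; $Y_0(z)=(A_n-z)(A_n-z)^*$; $G(z,x)=(Y_0(z)+x)^{-1}$ (for $x=0$ meaning $Y_0(z)^{-1}$). (C1) The empirical eigenvalue measure $\nu_{n,z}$ of $Y_0(z)$ converges weakly to a deterministic $\nu_z$ for a.e. $z$. (C2) $\exists M,d>0$: $\mathbb P\{n^{-1}\sum|a_{ij}|^2<M\}\ge1-n^{-1-d}$. (C3) With $\sigma_0=\{z:0\in\operatorname{supp}\nu_z\}$, $\sigma_\epsilon$ its $\epsilon$-neighbourhood: fixed $d_0>0$, some $d>0$, for every $\epsilon>0$ some $C(\epsilon)$ with $\mathbb P\{\sup_{z\notin\sigma_\epsilon}|\mathrm{tr}_nY_0(z)^{-1}-\int\lambda^{-1}d\nu_z|<C(\epsilon)n^{-d_0}\}>1-n^{-1-d}$. (C4) $\exists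 d_1,\varrho_0,\epsilon_0,d>0$: $\mathbb P\{\inf_{z\in\sigma_{\epsilon_0}}\mathrm{tr}_n(Y_0(z)+\varrho_0^2)^{-1}>1+d_1\}>1-n^{-1-d}$. $D=\sigma_0\cup\{z\notin\sigma_0:\int\lambda^{-1}d\nu_z\ge1\}$. *)

theory Defs
  imports "HOL-Probability.Probability"
    "Jordan_Normal_Form.Char_Poly"
    "Jordan_Normal_Form.Schur_Decomposition"
    "Jordan_Normal_Form.Gauss_Jordan_Elimination"
begin

definition trn :: "complex mat \<Rightarrow> complex" where
  "trn B = (\<Sum>i<dim_row B. B $$ (i, i)) / of_nat (dim_row B)"

definition Y0 :: "complex mat \<Rightarrow> complex \<Rightarrow> complex mat" where
  "Y0 A z = (let B = A - z \<cdot>\<^sub>m 1\<^sub>m (dim_row A) in B * mat_adjoint B)"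

text \<open>G(z,x) = (Y_0(z) + x)^{-1} (matrix inverse; only meaningful when invertible).\<close>
definition G :: "complex mat \<Rightarrow> complex \<Rightarrow> real \<Rightarrow> complex mat" where
  "G A z x = the (mat_inverse (Y0 A z + complex_of_real x \<cdot>\<^sub>m 1\<^sub>m (dim_row A)))"

text \<open>Empirical eigenvalue measure of Y_0(z): uniform distribution on the eigenvalues
  (roots of the characteristic polynomial, with multiplicity); they are real since Y_0 is Hermitian.\<close>
definition emp_meas :: "complex mat \<Rightarrow> complex \<Rightarrow> real measure" where
  "emp_meas A z = measure_pmf (map_pmf Re (pmf_of_multiset (proots (char_poly (Y0 A z)))))"

definition msupp :: "real measure \<Rightarrow> real set" where
  "msupp \<mu> = {x. \<forall>e>0. 0 < measure \<mu> (ball x e)}"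

definition sigma0 :: "(complex \<Rightarrow> real measure) \<Rightarrow> complex set" where
  "sigma0 nu = {z. 0 \<in> msupp (nu z)}"

definition sigma_nbhd :: "(complex \<Rightarrow> real measure) \<Rightarrow> real \<Rightarrow> complex set" where
  "sigma_nbhd nu e = {z. \<exists>w\<in>sigma0 nu. dist z w < e}"

definition Dset :: "(complex \<Rightarrow> real measure) \<Rightarrow> complex set" where
  "Dset nu = sigma0 nu \<union> {z. z \<notin> sigma0 nu \<and> (\<integral>l. 1 / l \<partial>nu z) \<ge> 1}"

end

theory Submission
  imports Defs
begin
no_notation Finite_Cartesian_Product.vec_nth (infixl "$" 90)


lemma mult_vec_entry: "Y \<in> carrier_mat n n \<Longrightarrow> w \<in> carrier_vec n \<Longrightarrow> i < n \<Longrightarrow>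
  (Y *\<^sub>v w) $ i = (\<Sum>j<n. Y $$ (i,j) * w $ j)"
  by (auto simp: scalar_prod_def lessThan_atLeast0 intro!: sum.cong)

lemma adj_carrier: "B \<in> carrier_mat n m \<Longrightarrow> mat_adjoint B \<in> carrier_mat m n"
  unfolding mat_adjoint_def by auto

lemma adj_entry: "B \<in> carrier_mat n m \<Longrightarrow> i < m \<Longrightarrow> j < n \<Longrightarrow>
   mat_adjoint B $$ (i,j) = cnj (B $$ (j,i))"
  unfolding mat_adjoint_def by (auto simp: mat_of_rows_def)

definition Bm :: "complex mat \<Rightarrow> complex \<Rightarrow> complex mat" where
  "Bm A z = A - z \<cdot>\<^sub>m 1\<^sub>m (dim_row A)"

lemma Bm_carrier: "A \<in> carrier_mat n n \<Longrightarrow> Bm A z \<in> carrier_mat n n"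
  unfolding Bm_def by auto

lemma Bm_entry: "A \<in> carrier_mat n n \<Longrightarrow> i < n \<Longrightarrow> k < n \<Longrightarrow>
  Bm A z $$ (i,k) = A $$ (i,k) - (if i = k then z else 0)"
  unfolding Bm_def by auto

lemma Y0_Bm: "Y0 A z = Bm A z * mat_adjoint (Bm A z)"
  unfolding Y0_def Bm_def Let_def by simp

lemma Y0_carrier: "A \<in> carrier_mat n n \<Longrightarrow> Y0 A z \<in> carrier_mat n n"
  unfolding Y0_Bm using Bm_carrier adj_carrier by (metis mult_carrier_mat)

lemma BB_entry: "B \<in> carrier_mat n n \<Longrightarrow> i < n \<Longrightarrow> j < n \<Longrightarrow>
  (B * mat_adjoint B) $$ (i,j) = (\<Sum>k<n. B $$ (i,k) * cnj (B $$ (j,k)))"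
  using adj_carrier[of B n n] adj_entry[of B n n]
  by (auto simp: scalar_prod_def lessThan_atLeast0 intro!: sum.cong)

lemma Y0_entry: "A \<in> carrier_mat n n \<Longrightarrow> i < n \<Longrightarrow> j < n \<Longrightarrow>
  Y0 A z $$ (i,j) = (\<Sum>k<n. Bm A z $$ (i,k) * cnj (Bm A z $$ (j,k)))"
  unfolding Y0_Bm by (rule BB_entry[OF Bm_carrier])

lemma quad_form:
  assumes B: "B \<in> carrier_mat n n" and w: "w \<in> carrier_vec n"
  shows "(\<Sum>i<n. cnj (w $ i) * ((B * mat_adjoint B) *\<^sub>v w) $ i)
     = of_real (\<Sum>k<n. (cmod (\<Sum>i<n. cnj (w $ i) * B $$ (i,k)))^2)"
proof -
  have Y: "B * mat_adjoint B \<in> carrier_mat n n" using B adj_carrier by (metis mult_carrier_mat)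
  have "(\<Sum>i<n. cnj (w $ i) * ((B * mat_adjoint B) *\<^sub>v w) $ i)
     = (\<Sum>i<n. cnj (w $ i) * (\<Sum>j<n. (\<Sum>k<n. B $$ (i,k) * cnj (B $$ (j,k))) * w $ j))"
    using Y w by (auto simp: mult_vec_entry[OF Y w] BB_entry[OF B] intro!: sum.cong)
  also have "\<dots> = (\<Sum>i<n. \<Sum>j<n. \<Sum>k<n. cnj (w $ i) * B $$ (i,k) * (cnj (B $$ (j,k)) * w $ j))"
    by (simp add: sum_distrib_left sum_distrib_right mult_ac)
  also have "\<dots> = (\<Sum>i<n. \<Sum>k<n. \<Sum>j<n. cnj (w $ i) * B $$ (i,k) * (cnj (B $$ (j,k)) * w $ j))"
    by (rule sum.cong[OF refl], rule sum.swap)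
  also have "\<dots> = (\<Sum>k<n. \<Sum>i<n. \<Sum>j<n. cnj (w $ i) * B $$ (i,k) * (cnj (B $$ (j,k)) * w $ j))"
    by (rule sum.swap)
  also have "\<dots> = (\<Sum>k<n. (\<Sum>i<n. cnj (w $ i) * B $$ (i,k)) * cnj (\<Sum>i<n. cnj (w $ i) * B $$ (i,k)))"
    by (simp add: sum_distrib_left sum_distrib_right mult_ac)
  also have "\<dots> = of_real (\<Sum>k<n. (cmod (\<Sum>i<n. cnj (w $ i) * B $$ (i,k)))^2)"
    unfolding of_real_sum by (rule sum.cong, simp, rule complex_norm_square[symmetric])
  finally show ?thesis .
qed

lemma eig_nonneg:
  assumes A: "A \<in> carrier_mat n n" and w: "w \<in> carrier_vec n" and w0: "w \<noteq> 0\<^sub>v n"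
    and ev: "Y0 A z *\<^sub>v w = l \<cdot>\<^sub>v w"
  shows "l = of_real (Re l) \<and> Re l \<ge> 0"
proof -
  define R where "R = (\<Sum>k<n. (cmod (\<Sum>i<n. cnj (w $ i) * Bm A z $$ (i,k)))^2)"
  define N where "N = (\<Sum>i<n. (cmod (w $ i))^2)"
  have R0: "R \<ge> 0" unfolding R_def by (auto intro: sum_nonneg)
  have "\<exists>i<n. w $ i \<noteq> 0" using w w0 by (auto simp: vec_eq_iff)
  then obtain i0 where i0: "i0 < n" "w $ i0 \<noteq> 0" by auto
  have "N \<ge> (cmod (w $ i0))^2" unfolding N_def
    by (rule member_le_sum) (use i0 in auto)
  with i0 have N0: "N > 0" by (smt (verit) norm_eq_zero zero_less_power2)
  have "of_real R = (\<Sum>i<n. cnj (w $ i) * (Y0 A z *\<^sub>v w) $ i)"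
    unfolding R_def Y0_Bm by (rule quad_form[symmetric, OF Bm_carrier[OF A] w])
  also have "\<dots> = (\<Sum>i<n. cnj (w $ i) * (l * w $ i))"
    using ev w by (auto intro!: sum.cong)
  also have "\<dots> = l * (\<Sum>i<n. w $ i * cnj (w $ i))"
    by (simp add: sum_distrib_left mult_ac)
  also have "\<dots> = l * of_real N" unfolding N_def of_real_sum
    by (rule arg_cong[where f="\<lambda>x. l * x"], rule sum.cong, simp, rule complex_norm_square[symmetric])
  finally have "l = of_real (R / N)" using N0 by (simp add: field_simps)
  then show ?thesis using R0 N0 by simp
qed



lemma sum_single: "j < (n::nat) \<Longrightarrow> (\<And>k. k < n \<Longrightarrow> k \<noteq> j \<Longrightarrow> f k = 0) \<Longrightarrow> (\<Sum>k<n. f k) = (f j :: 'a::comm_monoid_add)"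
proof -
  assume j: "j < n" and z: "\<And>k. k < n \<Longrightarrow> k \<noteq> j \<Longrightarrow> f k = 0"
  have "(\<Sum>k<n. f k) = sum f {j}" by (rule sum.mono_neutral_right) (use j z in auto)
  then show ?thesis by simp
qed

lemma tri_inv:
  fixes U :: "complex mat"
  assumes U: "U \<in> carrier_mat n n" and ut: "upper_triangular U" and nz: "\<And>i. i < n \<Longrightarrow> U $$ (i,i) \<noteq> 0"
  shows "\<exists>V \<in> carrier_mat n n. U * V = 1\<^sub>m n \<and> V * U = 1\<^sub>m n \<and> (\<forall>i<n. V $$ (i,i) = 1 / U $$ (i,i))"
proof -
  have "det U = prod_list (diag_mat U)" by (rule det_upper_triangular[OF ut U])
  also have "\<dots> \<noteq> 0" using nz U by (auto simp: diag_mat_def prod_list_zero_iff)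
  finally have d: "det U \<noteq> 0" .
  define V where "V = (1 / det U) \<cdot>\<^sub>m adj_mat U"
  have V: "V \<in> carrier_mat n n" unfolding V_def using adj_mat(1)[OF U] by auto
  have UV: "U * V = 1\<^sub>m n" unfolding V_def using adj_mat[OF U] d U
    by (simp add: mult_smult_distrib[OF U adj_mat(1)[OF U]], intro eq_matI, auto)
  have VU: "V * U = 1\<^sub>m n" unfolding V_def using adj_mat[OF U] d U
    by (simp add: mult_smult_assoc_mat[OF adj_mat(1)[OF U] U], intro eq_matI, auto)
  have ent: "(V * U) $$ (i,j) = (\<Sum>k<n. V $$ (i,k) * U $$ (k,j))" if "i < n" "j < n" for i j
    using V U that by (auto simp: scalar_prod_def lessThan_atLeast0 intro!: sum.cong)
  have low: "\<forall>i<n. j < i \<longrightarrow> V $$ (i,j) = 0" if "j < n" for j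
    using that
  proof (induct j rule: less_induct)
    case (less j)
    show ?case
    proof (intro allI impI)
      fix i assume i: "i < n" "j < i"
      have "0 = (V * U) $$ (i,j)" using VU i less by simp
      also have "\<dots> = V $$ (i,j) * U $$ (j,j)" unfolding ent[OF i(1) less(2)]
      proof (rule sum_single[OF less(2)])
        fix k assume k: "k < n" "k \<noteq> j"
        show "V $$ (i, k) * U $$ (k, j) = 0"
        proof (cases "k < j")
          case True then show ?thesis using less(1)[of k] k i less(2) by auto
        next
          case False then have "j < k" using k by auto
          then show ?thesis using upper_triangularD[OF ut, of j k] k U by auto
        qed
      qed
      finally show "V $$ (i,j) = 0" using nz[OF less(2)] by simp
    qed
  qed
  have diag: "V $$ (i,i) = 1 / U $$ (i,i)" if i: "i < n" for i
  proof -
    have "1 = (V * U) $$ (i,i)" using VU i by simp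
    also have "\<dots> = V $$ (i,i) * U $$ (i,i)" unfolding ent[OF i i]
    proof (rule sum_single[OF i])
      fix k assume k: "k < n" "k \<noteq> i"
      show "V $$ (i, k) * U $$ (k, i) = 0"
      proof (cases "k < i")
        case True then show ?thesis using low[of k] k i by auto
      next
        case False then have "i < k" using k by auto
        then show ?thesis using upper_triangularD[OF ut, of i k] k U by auto
      qed
    qed
    finally show ?thesis using nz[OF i] by (simp add: field_simps)
  qed
  show ?thesis using V UV VU diag by blast
qed

lemma trace_comm:
  fixes A B :: "complex mat"
  assumes A: "A \<in> carrier_mat n m" and B: "B \<in> carrier_mat m n"
  shows "(\<Sum>i<n. (A * B) $$ (i,i)) = (\<Sum>j<m. (B * A) $$ (j,j))"
proof -
  have "(\<Sum>i<n. (A * B) $$ (i,i)) = (\<Sum>i<n. \<Sum>j<m. A $$ (i,j) * B $$ (j,i))"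
    using A B by (auto simp: scalar_prod_def lessThan_atLeast0 intro!: sum.cong)
  also have "\<dots> = (\<Sum>j<m. \<Sum>i<n. B $$ (j,i) * A $$ (i,j))"
    by (subst sum.swap) (simp add: mult.commute)
  also have "\<dots> = (\<Sum>j<m. (B * A) $$ (j,j))"
    using A B by (auto simp: scalar_prod_def lessThan_atLeast0 intro!: sum.cong)
  finally show ?thesis .
qed



lemma mult_zero_vec: "Q \<in> carrier_mat n n \<Longrightarrow> Q *\<^sub>v 0\<^sub>v n = (0\<^sub>v n :: complex vec)"
  by (rule eq_vecI) (auto simp: scalar_prod_def)

lemma poly_lin_prod: "poly (\<Prod>a\<leftarrow>xs. [:- a, 1:]) x = (\<Prod>a\<leftarrow>xs. x - (a::complex))"
  by (induct xs) (auto simp: algebra_simps)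

lemma sandwich:
  fixes P Q U V :: "complex mat"
  assumes c: "P \<in> carrier_mat n n" "Q \<in> carrier_mat n n" "U \<in> carrier_mat n n" "V \<in> carrier_mat n n"
    and QP: "Q * P = 1\<^sub>m n" and UV: "U * V = 1\<^sub>m n" and PQ: "P * Q = 1\<^sub>m n"
  shows "(P * U * Q) * (P * V * Q) = 1\<^sub>m n"
proof -
  have "(P * U * Q) * (P * V * Q) = P * (U * ((Q * P) * V * Q))"
    using c by (simp add: assoc_mult_mat[of _ n n _ n _ n])
  also have "\<dots> = P * ((U * V) * Q)" using c QP by (simp add: assoc_mult_mat[of _ n n _ n _ n])
  also have "\<dots> = 1\<^sub>m n" using c UV PQ by simp
  finally show ?thesis .
qed

lemma core:
  fixes A :: "complex mat"
  assumes A: "A \<in> carrier_mat n n"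
  shows "\<exists>d::nat \<Rightarrow> real. (\<forall>i<n. d i \<ge> 0) \<and> (invertible_mat (Y0 A z) \<longrightarrow> (\<forall>i<n. d i \<noteq> 0)) \<and>
     (\<forall>t::real. (\<forall>i<n. d i + t \<noteq> 0) \<longrightarrow> invertible_mat (Y0 A z + complex_of_real t \<cdot>\<^sub>m 1\<^sub>m n) \<and>
        trn (G A z t) = complex_of_real ((\<Sum>i<n. 1 / (d i + t)) / real n))"
proof -
  define Y where "Y = Y0 A z"
  have Y: "Y \<in> carrier_mat n n" unfolding Y_def by (rule Y0_carrier[OF A])
  obtain es where es: "char_poly Y = (\<Prod>a\<leftarrow>es. [:- a, 1:])" using char_poly_factorized[OF Y] by blast
  obtain T P Q where sd: "schur_decomposition Y es = (T,P,Q)" by (cases "schur_decomposition Y es") auto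
  from schur_decomposition[OF Y es sd] have sim: "similar_mat_wit Y T P Q" and ut: "upper_triangular T"
    and dg: "diag_mat T = es" by auto
  from sim Y have T: "T \<in> carrier_mat n n" and P: "P \<in> carrier_mat n n" and Q: "Q \<in> carrier_mat n n"
    and PQ: "P * Q = 1\<^sub>m n" and QP: "Q * P = 1\<^sub>m n" and YPTQ: "Y = P * T * Q"
    unfolding similar_mat_wit_def Let_def by auto
  define d where "d i = Re (T $$ (i,i))" for i
  have eig: "T $$ (i,i) = of_real (d i) \<and> d i \<ge> 0" if i: "i < n" for i
  proof -
    let ?t = "T $$ (i,i)"
    have "poly (char_poly T) ?t = (\<Prod>a\<leftarrow>diag_mat T. ?t - a)"
      unfolding char_poly_upper_triangular[OF T ut] poly_lin_prod ..
    also have "\<dots> = 0" unfolding prod_list_zero_iff using i T by (auto simp: diag_mat_def)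
    finally have "eigenvalue T ?t" using eigenvalue_root_char_poly[OF T] by simp
    then obtain v where v: "v \<in> carrier_vec n" "v \<noteq> 0\<^sub>v n" "T *\<^sub>v v = ?t \<cdot>\<^sub>v v"
      unfolding eigenvalue_def eigenvector_def using T by auto
    define w where "w = P *\<^sub>v v"
    have w: "w \<in> carrier_vec n" unfolding w_def using P v by auto
    have Qw: "Q *\<^sub>v w = v" unfolding w_def using P Q v QP
      by (simp add: assoc_mult_mat_vec[symmetric, of Q n n P n v])
    have w0: "w \<noteq> 0\<^sub>v n"
    proof
      assume "w = 0\<^sub>v n"
      then have "v = 0\<^sub>v n" using Qw mult_zero_vec[OF Q] by simp
      with v show False by simp
    qed
    have "Y0 A z *\<^sub>v w = (P * T * Q) *\<^sub>v w" using YPTQ Y_def by simp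
    also have "\<dots> = P *\<^sub>v (T *\<^sub>v (Q *\<^sub>v w))" using P T Q w
      by (simp add: assoc_mult_mat_vec[of _ n n _ n w])
    also have "\<dots> = P *\<^sub>v (T *\<^sub>v v)" by (simp only: Qw)
    also have "\<dots> = ?t \<cdot>\<^sub>v w" unfolding v(3) w_def using P v by (simp add: mult_mat_vec)
    finally have "Y0 A z *\<^sub>v w = ?t \<cdot>\<^sub>v w" .
    from eig_nonneg[OF A w w0 this] show ?thesis unfolding d_def by simp
  qed
  have inv0: "\<forall>i<n. d i \<noteq> 0" if inv: "invertible_mat (Y0 A z)"
  proof (intro allI impI notI)
    fix i assume i: "i < n" and di: "d i = 0"
    let ?t = "T $$ (i,i)"
    have "poly (char_poly T) ?t = (\<Prod>a\<leftarrow>diag_mat T. ?t - a)"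
      unfolding char_poly_upper_triangular[OF T ut] poly_lin_prod ..
    also have "\<dots> = 0" unfolding prod_list_zero_iff using i T by (auto simp: diag_mat_def)
    finally have "eigenvalue T ?t" using eigenvalue_root_char_poly[OF T] by simp
    then obtain v where v: "v \<in> carrier_vec n" "v \<noteq> 0\<^sub>v n" "T *\<^sub>v v = ?t \<cdot>\<^sub>v v"
      unfolding eigenvalue_def eigenvector_def using T by auto
    define w where "w = P *\<^sub>v v"
    have w: "w \<in> carrier_vec n" unfolding w_def using P v by auto
    have Qw: "Q *\<^sub>v w = v" unfolding w_def using P Q v QP
      by (simp add: assoc_mult_mat_vec[symmetric, of Q n n P n v])
    have w0: "w \<noteq> 0\<^sub>v n"
    proof
      assume "w = 0\<^sub>v n"
      then have "v = 0\<^sub>v n" using Qw mult_zero_vec[OF Q] by simp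
      with v show False by simp
    qed
    have "Y *\<^sub>v w = (P * T * Q) *\<^sub>v w" using YPTQ by simp
    also have "\<dots> = P *\<^sub>v (T *\<^sub>v (Q *\<^sub>v w))" using P T Q w
      by (simp add: assoc_mult_mat_vec[of _ n n _ n w])
    also have "\<dots> = P *\<^sub>v (T *\<^sub>v v)" by (simp only: Qw)
    also have "\<dots> = ?t \<cdot>\<^sub>v w" unfolding v(3) w_def using P v by (simp add: mult_mat_vec)
    also have "?t = 0" using eig[OF i] di by simp
    finally have Yw: "Y *\<^sub>v w = 0\<^sub>v n" using w by auto
    from inv obtain B where B1: "Y * B = 1\<^sub>m (dim_row Y)" and B2: "B * Y = 1\<^sub>m (dim_row B)"
      unfolding invertible_mat_def inverts_mat_def Y_def by auto
    have "dim_row B = n" using B2 Y by (metis carrier_matD(2) index_mult_mat(3) index_one_mat(3))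
    moreover have "dim_col B = n" using B1 Y by (metis carrier_matD(1) index_mult_mat(3) index_one_mat(3))
    ultimately have B: "B \<in> carrier_mat n n" by auto
    have "w = (B * Y) *\<^sub>v w" using B2 \<open>dim_row B = n\<close> w by simp
    also have "\<dots> = B *\<^sub>v (Y *\<^sub>v w)" using B Y w by simp
    also have "\<dots> = 0\<^sub>v n" unfolding Yw by (rule mult_zero_vec[OF B])
    finally show False using w0 by simp
  qed
  have main: "invertible_mat (Y0 A z + complex_of_real t \<cdot>\<^sub>m 1\<^sub>m n) \<and>
        trn (G A z t) = complex_of_real ((\<Sum>i<n. 1 / (d i + t)) / real n)"
    if nz: "\<forall>i<n. d i + t \<noteq> 0" for t :: real
  proof -
    define U where "U = T + complex_of_real t \<cdot>\<^sub>m 1\<^sub>m n"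
    have U: "U \<in> carrier_mat n n" unfolding U_def using T by auto
    have Uut: "upper_triangular U"
      using upper_triangularD[OF ut] T unfolding U_def by (intro upper_triangularI) auto
    have Udiag: "U $$ (i,i) = of_real (d i + t)" if "i < n" for i
      using eig[OF that] T that unfolding U_def by auto
    obtain V where V: "V \<in> carrier_mat n n" and UV: "U * V = 1\<^sub>m n" and VU: "V * U = 1\<^sub>m n"
      and Vd: "\<forall>i<n. V $$ (i,i) = 1 / U $$ (i,i)"
      using tri_inv[OF U Uut] Udiag nz by (metis of_real_eq_0_iff)
    define M where "M = Y + complex_of_real t \<cdot>\<^sub>m 1\<^sub>m n"
    have M: "M \<in> carrier_mat n n" unfolding M_def using Y by auto
    have "P * U = P * T + complex_of_real t \<cdot>\<^sub>m P" unfolding U_def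
      using P T by (simp add: mult_add_distrib_mat[of P n n T] mult_smult_distrib[OF P one_carrier_mat] right_mult_one_mat[OF P])
    then have "P * U * Q = P * T * Q + complex_of_real t \<cdot>\<^sub>m (P * Q)"
      using P T Q by (simp add: add_mult_distrib_mat[of _ n n _ Q n] mult_smult_assoc_mat[OF P Q])
    then have MPUQ: "M = P * U * Q" unfolding M_def YPTQ PQ by simp
    define X where "X = P * V * Q"
    have X: "X \<in> carrier_mat n n" unfolding X_def using P V Q by auto
    have MX: "M * X = 1\<^sub>m n" unfolding MPUQ X_def by (rule sandwich[OF P Q U V QP UV PQ])
    have XM: "X * M = 1\<^sub>m n" unfolding MPUQ X_def by (rule sandwich[OF P Q V U QP VU PQ])
    have Mdim: "dim_row A = n" using A by auto
    have GX: "G A z t = X"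
    proof (cases "mat_inverse M")
      case None
      from mat_inverse(1)[OF M None, of "()"] have "M \<notin> Units (ring_mat TYPE(complex) n ())" .
      moreover have "M \<in> Units (ring_mat TYPE(complex) n ())"
        unfolding Units_def ring_mat_simps using M X MX XM by auto
      ultimately show ?thesis by blast
    next
      case (Some X')
      from mat_inverse(2)[OF M Some] have X': "M * X' = 1\<^sub>m n" "X' * M = 1\<^sub>m n" "X' \<in> carrier_mat n n" by auto
      have "X' = X' * (M * X)" using MX X' by simp
      also have "\<dots> = (X' * M) * X" by (rule assoc_mult_mat[symmetric, OF X'(3) M X])
      also have "\<dots> = X" using X'(2) X by simp
      finally have "X' = X" .
      then show ?thesis unfolding G_def Mdim using Some M_def Y_def by simp
    qed
    have inv: "invertible_mat M" unfolding invertible_mat_def inverts_mat_def square_mat.simps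
      using M X MX XM by auto
    have "(\<Sum>i<n. X $$ (i,i)) = (\<Sum>i<n. (Q * (P * V)) $$ (i,i))"
      unfolding X_def by (rule trace_comm) (use P V Q in auto)
    also have "Q * (P * V) = V" using P V Q QP by (simp add: assoc_mult_mat[symmetric, of Q n n P n V n])
    also have "(\<Sum>i<n. V $$ (i,i)) = (\<Sum>i<n. complex_of_real (1 / (d i + t)))"
      using Vd Udiag by (auto intro!: sum.cong)
    finally have tr: "(\<Sum>i<n. X $$ (i,i)) = complex_of_real (\<Sum>i<n. 1 / (d i + t))" by simp
    have "trn X = complex_of_real ((\<Sum>i<n. 1 / (d i + t)) / real n)"
      unfolding trn_def using X tr by simp
    then show ?thesis using inv GX unfolding M_def Y_def by simp
  qed
  show ?thesis using eig inv0 main unfolding Y_def by (intro exI[of _ d]) auto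
qed



lemma root_unique:
  fixes \<phi> :: "real \<Rightarrow> real" and \<epsilon> :: real
  assumes eps: "\<epsilon> > 0" and nn: "\<And>s. s > 0 \<Longrightarrow> \<phi> s \<ge> 0"
    and mono: "\<And>s t. 0 < s \<Longrightarrow> s \<le> t \<Longrightarrow> \<phi> t \<le> \<phi> s"
    and bd: "\<And>s. s > 0 \<Longrightarrow> \<phi> s \<le> 1 / s"
    and cont: "continuous_on {0<..} \<phi>"
  shows "\<exists>!x. x > 0 \<and> 1 - \<phi> (x\<^sup>2) = \<epsilon> / x"
proof -
  define h where "h x = x * (1 - \<phi> (x\<^sup>2))" for x
  have eq: "(1 - \<phi> (x\<^sup>2) = \<epsilon> / x) \<longleftrightarrow> h x = \<epsilon>" if "x > 0" for x
    using that unfolding h_def by (auto simp: field_simps)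
  define a where "a = \<epsilon> / 2"
  define b where "b = \<epsilon> + 1"
  have a0: "a > 0" "a \<le> b" using eps unfolding a_def b_def by auto
  have "\<phi> (a\<^sup>2) \<ge> 0" using nn[of "a\<^sup>2"] a0 by simp
  then have "h a \<le> a * 1" unfolding h_def using a0 by (intro mult_left_mono) auto
  then have ha: "h a \<le> \<epsilon>" using eps unfolding a_def by simp
  have b0: "b > 0" using eps b_def by auto
  have "\<phi> (b\<^sup>2) \<le> 1 / b\<^sup>2" using bd[of "b\<^sup>2"] b0 by auto
  then have "h b \<ge> b * (1 - 1 / b\<^sup>2)" unfolding h_def using b0 by (intro mult_left_mono) auto
  also have "b * (1 - 1 / b\<^sup>2) = b - 1 / b" using b0 by (simp add: field_simps power2_eq_square)
  also have "1 / b \<le> 1" using b_def eps by auto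
  then have "b - 1 / b \<ge> \<epsilon>" unfolding b_def by linarith
  ultimately have hb: "h b \<ge> \<epsilon>" by linarith
  have ch: "continuous_on {a..b} h" unfolding h_def
  proof (intro continuous_intros)
    have "continuous_on {a..b} (\<lambda>x. x\<^sup>2)" by (intro continuous_intros)
    moreover have "(\<lambda>x. x\<^sup>2) ` {a..b} \<subseteq> {0<..}" using a0 by auto
    ultimately show "continuous_on {a..b} (\<lambda>x. \<phi> (x\<^sup>2))"
      using continuous_on_compose2[OF cont] by blast
  qed
  obtain x where x: "a \<le> x" "x \<le> b" "h x = \<epsilon>" using IVT'[of h a \<epsilon> b, OF ha hb a0(2) ch] by auto
  have ex: "x > 0 \<and> 1 - \<phi> (x\<^sup>2) = \<epsilon> / x" using x a0 eq by auto
  have uniq: "y = x" if y: "y > 0" "1 - \<phi> (y\<^sup>2) = \<epsilon> / y" for y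
  proof -
    have key: False if "u > 0" "v > u" "h u = \<epsilon>" "h v = \<epsilon>" for u v
    proof -
      have g1: "1 - \<phi> (u\<^sup>2) > 0" using that eps unfolding h_def
        by (metis mult_pos_pos not_less_iff_gr_or_eq zero_less_mult_pos)
      have "\<phi> (v\<^sup>2) \<le> \<phi> (u\<^sup>2)" using mono[of "u\<^sup>2" "v\<^sup>2"] that by (auto intro: power_mono)
      then have "h v \<ge> v * (1 - \<phi> (u\<^sup>2))" unfolding h_def using that by (intro mult_left_mono) auto
      moreover have "v * (1 - \<phi> (u\<^sup>2)) > u * (1 - \<phi> (u\<^sup>2))" using that g1 by auto
      ultimately show False using that unfolding h_def by linarith
    qed
    have hy: "h y = \<epsilon>" using eq y by auto
    show ?thesis
    proof (rule ccontr)
      assume "y \<noteq> x"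
      then have "x < y \<or> y < x" by auto
      then show False using key[of x y] key[of y x] hy x(3) ex y by auto
    qed
  qed
  show ?thesis using ex uniq by blast
qed

lemma finite_part:
  fixes A :: "complex mat"
  assumes A: "A \<in> carrier_mat n n" and eps: "\<epsilon> > 0"
  shows "\<exists>!x. x > 0 \<and> 1 - trn (G A z (x\<^sup>2)) = complex_of_real (\<epsilon> / x)"
proof -
  obtain d where d0: "\<forall>i<n. d i \<ge> 0" and dt: "\<forall>t::real. (\<forall>i<n. d i + t \<noteq> 0) \<longrightarrow>
        trn (G A z t) = complex_of_real ((\<Sum>i<n. 1 / (d i + t)) / real n)"
    using core[OF A, of z] by blast
  define \<phi> where "\<phi> s = (\<Sum>i<n. 1 / (d i + s)) / real n" for s
  have tr: "trn (G A z (x\<^sup>2)) = complex_of_real (\<phi> (x\<^sup>2))" if "x > 0" for x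
  proof -
    have "x\<^sup>2 > 0" using that by simp
    have "\<forall>i<n. d i + x\<^sup>2 \<noteq> 0"
    proof (intro allI impI)
      fix i assume "i < n"
      then have "d i \<ge> 0" using d0 by auto
      then show "d i + x\<^sup>2 \<noteq> 0" using \<open>x\<^sup>2 > 0\<close> by linarith
    qed
    then show ?thesis using dt unfolding \<phi>_def by simp
  qed
  have "\<exists>!x. x > 0 \<and> 1 - \<phi> (x\<^sup>2) = \<epsilon> / x"
  proof (rule root_unique[OF eps])
    show "\<phi> s \<ge> 0" if "s > 0" for s unfolding \<phi>_def using d0 that
      by (intro divide_nonneg_nonneg sum_nonneg) auto
    show "\<phi> t \<le> \<phi> s" if "0 < s" "s \<le> t" for s t unfolding \<phi>_def using d0 that
      by (intro divide_right_mono sum_mono) (auto intro!: divide_left_mono)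
    show "\<phi> s \<le> 1 / s" if "s > 0" for s
    proof (cases "n = 0")
      case True then show ?thesis using that unfolding \<phi>_def by simp
    next
      case False
      have "(\<Sum>i<n. 1 / (d i + s)) \<le> (\<Sum>i<n. 1 / s)" using d0 that
        by (intro sum_mono) (auto intro!: divide_left_mono)
      also have "\<dots> = real n / s" by simp
      finally show ?thesis unfolding \<phi>_def using False that by (simp add: field_simps)
    qed
    show "continuous_on {0<..} \<phi>"
    proof (cases "n = 0")
      case True then show ?thesis unfolding \<phi>_def by simp
    next
      case False then show ?thesis unfolding \<phi>_def using d0
        by (intro continuous_intros) (auto intro!: add_nonneg_pos[THEN less_imp_neq, THEN not_sym])
    qed
  qed
  moreover have "(1 - trn (G A z (x\<^sup>2)) = complex_of_real (\<epsilon> / x)) \<longleftrightarrow> (1 - \<phi> (x\<^sup>2) = \<epsilon> / x)"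
    if "x > 0" for x
    using tr[OF that] by (metis of_real_1 of_real_diff of_real_eq_iff)
  ultimately show ?thesis by (metis (no_types, lifting))
qed



lemma nu_part:
  fixes \<mu> :: "real measure" and e \<epsilon> :: real
  assumes P: "prob_space \<mu>" and S: "sets \<mu> = sets borel" and pos: "emeasure \<mu> {0..} = 1"
    and e: "e > 0" and b0: "measure \<mu> (ball 0 e) = 0"
    and I: "(\<integral>l. 1 / l \<partial>\<mu>) < 1" and eps: "\<epsilon> > 0"
  shows "(\<exists>!x. x > 0 \<and> 1 - (\<integral>l. 1 / (l + x\<^sup>2) \<partial>\<mu>) = \<epsilon> / x) \<and>
         (\<forall>x\<ge>0. (\<integral>l. 1 / (l + x\<^sup>2) \<partial>\<mu>) \<noteq> 1)"
proof -
  interpret prob_space \<mu> by (rule P)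
  have sp: "space \<mu> = UNIV" using sets_eq_imp_space_eq[OF S] by simp
  have n1: "ball 0 e \<in> null_sets \<mu>"
    using b0 emeasure_eq_measure S by (auto simp: null_sets_def)
  have m0: "measure \<mu> {0..} = 1" using pos emeasure_eq_measure by simp
  have "measure \<mu> (space \<mu> - {0..}) = 0"
    using finite_measure_compl[of "{0..}"] S m0 prob_space by simp
  then have n2: "space \<mu> - {0..} \<in> null_sets \<mu>"
    using emeasure_eq_measure S by (auto simp: null_sets_def)
  have AEe: "AE l in \<mu>. e \<le> l"
    using AE_not_in[OF n1] AE_not_in[OF n2]
    by eventually_elim (auto simp: sp dist_real_def)
  have meas: "(\<lambda>l. 1 / (l + s)) \<in> borel_measurable \<mu>" for s :: real
    unfolding measurable_cong_sets[OF S refl] by measurable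
  have intg: "integrable \<mu> (\<lambda>l. 1 / (l + s))" if s: "s \<ge> 0" for s :: real
  proof (rule integrable_const_bound[where B="1/e"])
    show "AE l in \<mu>. norm (1 / (l + s)) \<le> 1 / e"
      using AEe by eventually_elim (use e s in \<open>auto intro!: divide_left_mono\<close>)
  qed (rule meas)
  define \<phi> where "\<phi> s = (\<integral>l. 1 / (l + s) \<partial>\<mu>)" for s
  have mono: "\<phi> t \<le> \<phi> s" if "0 \<le> s" "s \<le> t" for s t
    unfolding \<phi>_def
  proof (rule integral_mono_AE[OF intg intg])
    show "AE l in \<mu>. 1 / (l + t) \<le> 1 / (l + s)"
      using AEe by eventually_elim (use e that in \<open>auto intro!: divide_left_mono\<close>)
  qed (use that in auto)
  have lip: "dist (\<phi> s) (\<phi> t) \<le> (1 / e\<^sup>2) * dist s t" if st: "0 \<le> s" "0 \<le> t" for s t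
  proof -
    have "\<phi> s - \<phi> t = (\<integral>l. 1 / (l + s) - 1 / (l + t) \<partial>\<mu>)"
      unfolding \<phi>_def by (rule Bochner_Integration.integral_diff[symmetric, OF intg intg]) (use st in auto)
    also have "\<bar>\<dots>\<bar> \<le> (\<integral>l. \<bar>1 / (l + s) - 1 / (l + t)\<bar> \<partial>\<mu>)" by (rule integral_abs_bound)
    also have "\<dots> \<le> (\<integral>l. \<bar>s - t\<bar> / e\<^sup>2 \<partial>\<mu>)"
    proof (rule integral_mono_AE)
      show "integrable \<mu> (\<lambda>l. \<bar>1 / (l + s) - 1 / (l + t)\<bar>)"
        using intg[OF st(1)] intg[OF st(2)] by auto
      show "integrable \<mu> (\<lambda>l. \<bar>s - t\<bar> / e\<^sup>2)" by simp
      show "AE l in \<mu>. \<bar>1 / (l + s) - 1 / (l + t)\<bar> \<le> \<bar>s - t\<bar> / e\<^sup>2"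
        using AEe
      proof eventually_elim
        case (elim l)
        have ls: "l + s \<ge> e" "l + t \<ge> e" using elim st by auto
        have pp: "(l + s) * (l + t) \<ge> e * e" using ls e by (intro mult_mono) auto
        have q: "1 / (l + s) - 1 / (l + t) = (t - s) / ((l + s) * (l + t))"
          using ls e by (simp add: field_simps)
        have pos: "(l + s) * (l + t) > 0" using ls e by simp
        have "\<bar>1 / (l + s) - 1 / (l + t)\<bar> = \<bar>s - t\<bar> / ((l + s) * (l + t))"
          unfolding q abs_divide using pos by (simp add: abs_minus_commute)
        also have "\<dots> \<le> \<bar>s - t\<bar> / (e * e)"
          using pp e pos by (intro divide_left_mono) auto
        finally show ?case by (simp add: power2_eq_square)
      qed
    qed
    also have "\<dots> = (1 / e\<^sup>2) * dist s t" using prob_space by (simp add: dist_real_def)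
    finally show ?thesis by (simp add: dist_real_def)
  qed
  have cont: "continuous_on {0<..} \<phi>"
  proof (rule lipschitz_on_continuous_on)
    show "(1 / e\<^sup>2)-lipschitz_on {0<..} \<phi>"
      by (rule lipschitz_onI) (use lip in auto)
  qed
  have ex: "\<exists>!x. x > 0 \<and> 1 - \<phi> (x\<^sup>2) = \<epsilon> / x"
  proof (rule root_unique[OF eps _ _ _ cont])
    show "\<phi> s \<ge> 0" if "s > 0" for s unfolding \<phi>_def
      by (rule integral_nonneg_AE) (use AEe e that in \<open>auto elim!: eventually_mono\<close>)
    show "\<phi> t \<le> \<phi> s" if "0 < s" "s \<le> t" for s t using mono that by auto
    show "\<phi> s \<le> 1 / s" if s: "s > 0" for s
    proof -
      have "\<phi> s \<le> (\<integral>l. 1 / s \<partial>\<mu>)" unfolding \<phi>_def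
      proof (rule integral_mono_AE[OF intg])
        show "AE l in \<mu>. 1 / (l + s) \<le> 1 / s"
          using AEe by eventually_elim (use e s in \<open>auto intro!: divide_left_mono\<close>)
      qed (use s in auto)
      then show ?thesis using prob_space by simp
    qed
  qed
  have "\<phi> (x\<^sup>2) \<noteq> 1" if "x \<ge> 0" for x
  proof -
    have "\<phi> (x\<^sup>2) \<le> \<phi> 0" using mono[of 0 "x\<^sup>2"] by simp
    also have "\<phi> 0 < 1" using I unfolding \<phi>_def by simp
    finally show ?thesis by simp
  qed
  then show ?thesis using ex unfolding \<phi>_def by auto
qed



lemma inv_obtain:
  fixes M :: "complex mat"
  assumes inv: "invertible_mat M" and M: "M \<in> carrier_mat n n"
  shows "\<exists>B\<in>carrier_mat n n. M * B = 1\<^sub>m n \<and> B * M = 1\<^sub>m n"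
proof -
  from inv obtain B where B1: "M * B = 1\<^sub>m (dim_row M)" and B2: "B * M = 1\<^sub>m (dim_row B)"
    unfolding invertible_mat_def inverts_mat_def by auto
  have "dim_row B = n" using B2 M by (metis carrier_matD(2) index_mult_mat(3) index_one_mat(3))
  moreover have "dim_col B = n" using B1 M by (metis carrier_matD(1) index_mult_mat(3) index_one_mat(3))
  ultimately show ?thesis using B1 B2 M by auto
qed

lemma inv_the:
  fixes M X :: "complex mat"
  assumes M: "M \<in> carrier_mat n n" and X: "X \<in> carrier_mat n n" and MX: "M * X = 1\<^sub>m n" and XM: "X * M = 1\<^sub>m n"
  shows "the (mat_inverse M) = X"
proof (cases "mat_inverse M")
  case None
  from mat_inverse(1)[OF M None, of "()"] have "M \<notin> Units (ring_mat TYPE(complex) n ())" .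
  moreover have "M \<in> Units (ring_mat TYPE(complex) n ())"
    unfolding Units_def ring_mat_simps using M X MX XM by auto
  ultimately show ?thesis by blast
next
  case (Some X')
  from mat_inverse(2)[OF M Some] have X': "M * X' = 1\<^sub>m n" "X' * M = 1\<^sub>m n" "X' \<in> carrier_mat n n" by auto
  have "X' = X' * (M * X)" using MX X' by simp
  also have "\<dots> = (X' * M) * X" by (rule assoc_mult_mat[symmetric, OF X'(3) M X])
  also have "\<dots> = X" using X'(2) X by simp
  finally show ?thesis using Some by simp
qed

lemma cont_det:
  fixes F :: "complex \<Rightarrow> complex mat"
  assumes c: "\<And>z. z \<in> S \<Longrightarrow> F z \<in> carrier_mat m m"
    and ce: "\<And>i j. i < m \<Longrightarrow> j < m \<Longrightarrow> continuous_on S (\<lambda>z. F z $$ (i,j))"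
  shows "continuous_on S (\<lambda>z. det (F z))"
proof -
  have cp: "continuous_on S (\<lambda>z. \<Prod>i = 0..<m. F z $$ (i, p i))" if p: "p permutes {0..<m}" for p
  proof (rule continuous_on_prod)
    fix i assume i: "i \<in> {0..<m}"
    have "p i \<in> {0..<m}" using permutes_in_image[OF p] i by simp
    then show "continuous_on S (\<lambda>z. F z $$ (i, p i))" using i by (intro ce) auto
  qed
  have "continuous_on S (\<lambda>z. \<Sum>p\<in>{p. p permutes {0..<m}}. signof p * (\<Prod>i = 0..<m. F z $$ (i, p i)))"
    by (rule continuous_on_sum, rule continuous_on_mult_left, rule cp) simp
  then show ?thesis by (rule continuous_on_eq) (rule det_def'[OF c, symmetric])
qed

lemma cont_if_z: "continuous_on S (\<lambda>z::complex. if b then z else 0)"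
  by (cases b) (auto intro: continuous_intros)

lemma cont_Y0_entry:
  assumes A: "A \<in> carrier_mat n n" and i: "i < n" and j: "j < n"
  shows "continuous_on S (\<lambda>z. Y0 A z $$ (i,j))"
proof -
  have "continuous_on S (\<lambda>z. \<Sum>k<n. (A $$ (i,k) - (if i = k then z else 0)) * cnj (A $$ (j,k) - (if j = k then z else 0)))"
    by (intro continuous_intros cont_if_z)
  then show ?thesis
    by (rule continuous_on_eq) (auto simp: Y0_entry[OF A i j] Bm_entry[OF A] i j intro!: sum.cong)
qed

lemma trn_G0:
  fixes A :: "complex mat"
  assumes A: "A \<in> carrier_mat n n" and inv: "invertible_mat (Y0 A z)"
  shows "det (Y0 A z) \<noteq> 0 \<and> trn (G A z 0) = (\<Sum>i<n. det (mat_delete (Y0 A z) i i)) / det (Y0 A z) / of_nat n"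
proof -
  define Y where "Y = Y0 A z"
  have Y: "Y \<in> carrier_mat n n" unfolding Y_def by (rule Y0_carrier[OF A])
  obtain B where B: "B \<in> carrier_mat n n" "Y * B = 1\<^sub>m n" "B * Y = 1\<^sub>m n"
    using inv_obtain[OF inv[folded Y_def] Y] by blast
  have "det Y * det B = 1" using det_mult[OF Y B(1)] B(2) by simp
  then have d: "det Y \<noteq> 0" by auto
  define X where "X = (1 / det Y) \<cdot>\<^sub>m adj_mat Y"
  have X: "X \<in> carrier_mat n n" unfolding X_def using adj_mat(1)[OF Y] by auto
  have YX: "Y * X = 1\<^sub>m n" unfolding X_def using adj_mat[OF Y] d Y
    by (simp add: mult_smult_distrib[OF Y adj_mat(1)[OF Y]], intro eq_matI, auto)
  have XY: "X * Y = 1\<^sub>m n" unfolding X_def using adj_mat[OF Y] d Y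
    by (simp add: mult_smult_assoc_mat[OF adj_mat(1)[OF Y] Y], intro eq_matI, auto)
  have Y0: "Y + complex_of_real 0 \<cdot>\<^sub>m 1\<^sub>m (dim_row A) = Y" using Y A by (intro eq_matI) auto
  have G: "G A z 0 = X" unfolding G_def Y_def[symmetric] Y0 by (rule inv_the[OF Y X YX XY])
  have ev: "(-1::complex) ^ (i + i) = 1" for i by (simp add: mult_2[symmetric] power_mult)
  have "(\<Sum>i<n. X $$ (i,i)) = (\<Sum>i<n. det (mat_delete Y i i) / det Y)"
    unfolding X_def using Y by (auto simp: adj_mat_def cofactor_def ev intro!: sum.cong)
  also have "\<dots> = (\<Sum>i<n. det (mat_delete Y i i)) / det Y" by (simp add: sum_divide_distrib)
  finally show ?thesis unfolding trn_def G using X d Y_def by simp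
qed

lemma mat_delete_entry: "Y \<in> carrier_mat n n \<Longrightarrow> k < n - 1 \<Longrightarrow> l < n - 1 \<Longrightarrow>
  mat_delete Y i i $$ (k,l) = Y $$ (if k < i then k else Suc k, if l < i then l else Suc l)"
  unfolding mat_delete_def by auto

lemma cont_trn:
  fixes A :: "complex mat"
  assumes A: "A \<in> carrier_mat n n" and inv: "\<And>z. z \<in> S \<Longrightarrow> invertible_mat (Y0 A z)"
  shows "continuous_on S (\<lambda>z. trn (G A z 0))"
proof -
  have cd: "continuous_on S (\<lambda>z. det (Y0 A z))"
    by (rule cont_det[of S "\<lambda>z. Y0 A z" n]) (auto intro: Y0_carrier[OF A] cont_Y0_entry[OF A])
  have cm: "continuous_on S (\<lambda>z. det (mat_delete (Y0 A z) i i))" if i: "i < n" for i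
  proof (rule cont_det[of S _ "n - 1"])
    show "mat_delete (Y0 A z) i i \<in> carrier_mat (n - 1) (n - 1)" for z
      using Y0_carrier[OF A, of z] by (auto simp: mat_delete_def)
    fix k l assume kl: "k < n - 1" "l < n - 1"
    have "continuous_on S (\<lambda>z. Y0 A z $$ (if k < i then k else Suc k, if l < i then l else Suc l))"
      by (rule cont_Y0_entry[OF A]) (use kl in auto)
    then show "continuous_on S (\<lambda>z. mat_delete (Y0 A z) i i $$ (k, l))"
      by (rule continuous_on_eq) (simp add: mat_delete_entry[OF Y0_carrier[OF A] kl])
  qed
  have "continuous_on S (\<lambda>z. (\<Sum>i<n. det (mat_delete (Y0 A z) i i)) / det (Y0 A z) / of_nat n)"
  proof (cases "n = 0")
    case True then show ?thesis by simp
  next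
    case False
    show ?thesis using trn_G0[OF A inv] False
      by (intro continuous_intros cm cd) auto
  qed
  then show ?thesis
    by (rule continuous_on_eq) (use trn_G0[OF A inv] in auto)
qed



lemma part2:
  fixes M :: "'w measure" and A :: "nat \<Rightarrow> 'w \<Rightarrow> complex mat"
    and nu :: "complex \<Rightarrow> real measure"
  assumes M: "prob_space M"
    and carrier: "\<forall>n. \<forall>\<omega>\<in>space M. A n \<omega> \<in> carrier_mat n n"
    and C3: "\<exists>d0>0. \<exists>d>0. \<forall>e>0. \<exists>C. \<forall>n\<ge>1.
              \<P>(\<omega> in M. \<exists>c < C * real n powr (- d0). \<forall>z. z \<notin> sigma_nbhd nu e \<longrightarrow>
                  invertible_mat (Y0 (A n \<omega>) z) \<and>
                  cmod (trn (G (A n \<omega>) z 0) - complex_of_real (\<integral>l. 1 / l \<partial>nu z)) \<le> c)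
                > 1 - real n powr (-1 - d)"
    and E: "compact E" "E \<inter> closure (Dset nu) = {}"
  shows "AE \<omega> in M. \<exists>n0. \<forall>n\<ge>n0. \<forall>z\<in>E. \<forall>x\<ge>(0::real).
               invertible_mat (Y0 (A n \<omega>) z + complex_of_real (x\<^sup>2) \<cdot>\<^sub>m 1\<^sub>m n) \<and>
               trn (G (A n \<omega>) z (x\<^sup>2)) \<noteq> 1"
proof -
  interpret prob_space M by (rule M)
  obtain d0 d where d0: "d0 > 0" and d: "d > 0" and H: "\<forall>e>0. \<exists>C. \<forall>n\<ge>1.
              \<P>(\<omega> in M. \<exists>c < C * real n powr (- d0). \<forall>z. z \<notin> sigma_nbhd nu e \<longrightarrow>
                  invertible_mat (Y0 (A n \<omega>) z) \<and>
                  cmod (trn (G (A n \<omega>) z 0) - complex_of_real (\<integral>l. 1 / l \<partial>nu z)) \<le> c)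
                > 1 - real n powr (-1 - d)" using C3 by blast
  have "sigma0 nu \<subseteq> Dset nu" unfolding Dset_def by auto
  then have "closure (sigma0 nu) \<subseteq> closure (Dset nu)" by (rule closure_mono)
  then have Ecl: "E \<inter> closure (sigma0 nu) = {}" using E(2) by blast
  obtain \<delta> where \<delta>: "\<delta> > 0" and sep: "\<forall>x\<in>E. \<forall>y\<in>closure (sigma0 nu). \<delta> \<le> dist x y"
    using separate_compact_closed[OF E(1) closed_closure Ecl] by blast
  have Eout: "z \<notin> sigma_nbhd nu \<delta>" if "z \<in> E" for z
    using sep that closure_subset unfolding sigma_nbhd_def by fastforce
  obtain C where HC: "\<forall>n\<ge>1.
              \<P>(\<omega> in M. \<exists>c < C * real n powr (- d0). \<forall>z. z \<notin> sigma_nbhd nu \<delta> \<longrightarrow>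
                  invertible_mat (Y0 (A n \<omega>) z) \<and>
                  cmod (trn (G (A n \<omega>) z 0) - complex_of_real (\<integral>l. 1 / l \<partial>nu z)) \<le> c)
                > 1 - real n powr (-1 - d)" using H \<delta> by blast
  define Good where "Good n = {\<omega> \<in> space M. \<exists>c < C * real n powr (- d0). \<forall>z. z \<notin> sigma_nbhd nu \<delta> \<longrightarrow>
                  invertible_mat (Y0 (A n \<omega>) z) \<and>
                  cmod (trn (G (A n \<omega>) z 0) - complex_of_real (\<integral>l. 1 / l \<partial>nu z)) \<le> c}" for n
  have pl1: "real n powr (-1 - d) < 1" if "n \<ge> 2" for n :: nat
    by (rule powr_less_one) (use that d in auto)
  have PG: "measure M (Good n) > 1 - real n powr (-1 - d)" if "n \<ge> 2" for n
    using HC that unfolding Good_def by auto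
  have GS: "Good n \<in> sets M" if "n \<ge> 2" for n
  proof (rule ccontr)
    assume "Good n \<notin> sets M"
    then have "measure M (Good n) = 0" by (rule measure_notin_sets)
    then show False using PG[OF that] pl1[OF that] by simp
  qed
  define Bad where "Bad n = (if n \<ge> 2 then space M - Good n else {})" for n
  have BS: "Bad n \<in> sets M" for n unfolding Bad_def using GS by auto
  have Bfin: "emeasure M (Bad n) < \<infinity>" for n using emeasure_finite[of "Bad n"] by (simp add: less_top[symmetric])
  have Bm: "measure M (Bad n) \<le> real n powr (-1 - d)" if "n \<ge> 2" for n
    unfolding Bad_def using that prob_compl[OF GS[OF that]] PG[OF that] by simp
  have Bsum: "summable (\<lambda>n. measure M (Bad n))"
  proof (rule summable_comparison_test')
    show "summable (\<lambda>n. real n powr (-1 - d))" using d by (simp add: summable_real_powr_iff)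
    show "norm (measure M (Bad n)) \<le> real n powr (-1 - d)" if "2 \<le> n" for n
      using Bm[OF that] by simp
  qed
  have BC: "AE \<omega> in M. eventually (\<lambda>n. \<omega> \<in> space M - Bad n) sequentially"
    by (rule borel_cantelli_AE1[OF BS Bfin Bsum])
  have rate: "((\<lambda>n. C * real n powr (- d0)) \<longlongrightarrow> 0) sequentially"
    using tendsto_mult_right_zero[OF tendsto_neg_powr[OF _ filterlim_real_sequentially], of "-d0" C] d0 by simp
  show ?thesis using BC AE_space
  proof eventually_elim
    case (elim \<omega>)
    then have \<omega>: "\<omega> \<in> space M" by simp
    show ?case
    proof (cases "E = {}")
      case True then show ?thesis by simp
    next
      case Ene: False
      from elim obtain N0 where N0: "\<forall>n\<ge>N0. \<omega> \<in> space M - Bad n"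
        unfolding eventually_sequentially by blast
      define N where "N = max N0 2"
      define f where "f n z = trn (G (A n \<omega>) z 0)" for n z
      define I where "I z = (\<integral>l. 1 / l \<partial>nu z)" for z
      have good: "invertible_mat (Y0 (A n \<omega>) z) \<and> cmod (f n z - complex_of_real (I z)) < C * real n powr (- d0)"
        if n: "n \<ge> N" and z: "z \<in> E" for n z
      proof -
        have "\<omega> \<notin> Bad n" using N0 n unfolding N_def by auto
        then have "\<omega> \<in> Good n" using \<omega> n unfolding Bad_def N_def by auto
        then obtain c where c: "c < C * real n powr (- d0)" and cz: "\<forall>z. z \<notin> sigma_nbhd nu \<delta> \<longrightarrow>
                  invertible_mat (Y0 (A n \<omega>) z) \<and>
                  cmod (trn (G (A n \<omega>) z 0) - complex_of_real (\<integral>l. 1 / l \<partial>nu z)) \<le> c"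
          unfolding Good_def by blast
        show ?thesis using cz Eout[OF z] c unfolding f_def I_def by force
      qed
      have contf: "\<forall>\<^sub>F n in sequentially. continuous_on E (f n)"
        unfolding eventually_sequentially f_def
        by (rule exI[of _ N], intro allI impI cont_trn[OF carrier[rule_format, OF \<omega>]]) (use good in auto)
      have ul: "uniform_limit E f (\<lambda>z. complex_of_real (I z)) sequentially"
        unfolding uniform_limit_iff
      proof (intro allI impI)
        fix e :: real assume e: "e > 0"
        have "\<forall>\<^sub>F n in sequentially. C * real n powr (- d0) < e" using order_tendstoD(2)[OF rate e] .
        moreover have "\<forall>\<^sub>F n in sequentially. n \<ge> N" by (rule eventually_ge_at_top)
        ultimately show "\<forall>\<^sub>F n in sequentially. \<forall>z\<in>E. dist (f n z) (complex_of_real (I z)) < e"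
        proof eventually_elim
          case (elim n)
          then show ?case using good[of n] by (auto simp: dist_norm) (smt (verit))
        qed
      qed
      have "continuous_on E (\<lambda>z. complex_of_real (I z))"
        by (rule uniform_limit_theorem[OF contf ul]) simp
      then have "continuous_on E (\<lambda>z. Re (complex_of_real (I z)))" by (rule continuous_on_Re)
      then have cI: "continuous_on E I" by simp
      obtain z0 where z0: "z0 \<in> E" and z0max: "\<forall>z\<in>E. I z \<le> I z0"
        using continuous_attains_sup[OF E(1) Ene cI] by blast
      have "z0 \<notin> Dset nu" using z0 E(2) closure_subset by blast
      then have m1: "I z0 < 1" unfolding Dset_def I_def by auto
      have "\<forall>\<^sub>F n in sequentially. C * real n powr (- d0) < 1 - I z0"
        using order_tendstoD(2)[OF rate] m1 by simp
      then obtain N1 where N1: "\<forall>n\<ge>N1. C * real n powr (- d0) < 1 - I z0"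
        unfolding eventually_sequentially by blast
      show ?thesis
      proof (intro exI[of _ "max N N1"] allI impI ballI)
        fix n z and x :: real assume n: "max N N1 \<le> n" and z: "z \<in> E" and x: "0 \<le> x"
        have An: "A n \<omega> \<in> carrier_mat n n" using carrier \<omega> by auto
        obtain dd where dd0: "\<forall>i<n. dd i \<ge> 0" and ddinv: "invertible_mat (Y0 (A n \<omega>) z) \<longrightarrow> (\<forall>i<n. dd i \<noteq> 0)"
          and ddt: "\<forall>t::real. (\<forall>i<n. dd i + t \<noteq> 0) \<longrightarrow> invertible_mat (Y0 (A n \<omega>) z + complex_of_real t \<cdot>\<^sub>m 1\<^sub>m n) \<and>
            trn (G (A n \<omega>) z t) = complex_of_real ((\<Sum>i<n. 1 / (dd i + t)) / real n)"
          using core[OF An, of z] by blast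
        have gz: "invertible_mat (Y0 (A n \<omega>) z) \<and> cmod (f n z - complex_of_real (I z)) < C * real n powr (- d0)"
          using good[OF _ z] n by auto
        have ddp: "dd i > 0" if "i < n" for i using dd0 ddinv gz that by force
        have ddx: "\<forall>i<n. dd i + t \<noteq> 0" if "t \<ge> 0" for t
          using ddp that by (metis add_pos_nonneg less_irrefl)
        from ddt ddx[of "x\<^sup>2"] have r1: "invertible_mat (Y0 (A n \<omega>) z + complex_of_real (x\<^sup>2) \<cdot>\<^sub>m 1\<^sub>m n)"
          and r2: "trn (G (A n \<omega>) z (x\<^sup>2)) = complex_of_real ((\<Sum>i<n. 1 / (dd i + x\<^sup>2)) / real n)" by auto
        from ddt ddx[of 0] have r0: "f n z = complex_of_real ((\<Sum>i<n. 1 / (dd i + 0)) / real n)"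
          unfolding f_def by auto
        have le: "(\<Sum>i<n. 1 / (dd i + x\<^sup>2)) / real n \<le> (\<Sum>i<n. 1 / (dd i + 0)) / real n"
          using ddp by (intro divide_right_mono sum_mono) (auto intro!: divide_left_mono mult_pos_pos add_pos_nonneg)
        have "(\<Sum>i<n. 1 / (dd i + 0)) / real n - I z \<le> cmod (f n z - complex_of_real (I z))"
          using abs_Re_le_cmod[of "f n z - complex_of_real (I z)"] unfolding r0 by simp
        also have "\<dots> < C * real n powr (- d0)" using gz by simp
        also have "\<dots> < 1 - I z0" using N1 n by auto
        finally have "(\<Sum>i<n. 1 / (dd i + x\<^sup>2)) / real n < 1" using le z0max z by smt
        then have "trn (G (A n \<omega>) z (x\<^sup>2)) \<noteq> 1" unfolding r2
          by (metis less_irrefl of_real_eq_1_iff)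
        then show "invertible_mat (Y0 (A n \<omega>) z + complex_of_real (x\<^sup>2) \<cdot>\<^sub>m 1\<^sub>m n) \<and>
               trn (G (A n \<omega>) z (x\<^sup>2)) \<noteq> 1" using r1 by simp
      qed
    qed
  qed
qed


theorem proposition6:
  fixes M :: "'w measure" and A :: "nat \<Rightarrow> 'w \<Rightarrow> complex mat"
    and nu :: "complex \<Rightarrow> real measure" and \<epsilon> :: real
  assumes M: "prob_space M"
    and carrier: "\<forall>n. \<forall>\<omega>\<in>space M. A n \<omega> \<in> carrier_mat n n"
    and nu: "\<forall>z. prob_space (nu z) \<and> sets (nu z) = sets borel \<and> emeasure (nu z) {0..} = 1"
    and C1: "AE z in lborel. AE \<omega> in M. weak_conv_m (\<lambda>n. emp_meas (A n \<omega>) z) (nu z)"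
    and C2: "\<exists>K d. K > 0 \<and> d > 0 \<and> (\<forall>n\<ge>1.
              \<P>(\<omega> in M. (\<Sum>i<n. \<Sum>j<n. (cmod (A n \<omega> $$ (i, j)))\<^sup>2) / real n < K)
                \<ge> 1 - real n powr (-1 - d))"
    and C3: "\<exists>d0>0. \<exists>d>0. \<forall>e>0. \<exists>C. \<forall>n\<ge>1.
              \<P>(\<omega> in M. \<exists>c < C * real n powr (- d0). \<forall>z. z \<notin> sigma_nbhd nu e \<longrightarrow>
                  invertible_mat (Y0 (A n \<omega>) z) \<and>
                  cmod (trn (G (A n \<omega>) z 0) - complex_of_real (\<integral>l. 1 / l \<partial>nu z)) \<le> c)
                > 1 - real n powr (-1 - d)"
    and C4: "\<exists>d1>0. \<exists>\<rho>0>0. \<exists>e0>0. \<exists>d>0. \<forall>n\<ge>1.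
              \<P>(\<omega> in M. \<exists>c > 1 + d1. \<forall>z\<in>sigma_nbhd nu e0.
                  Re (trn (G (A n \<omega>) z (\<rho>0\<^sup>2))) \<ge> c)
                > 1 - real n powr (-1 - d)"
    and eps: "\<epsilon> > 0"
  shows "(\<forall>z. z \<notin> closure (Dset nu) \<longrightarrow>
            (\<forall>n. \<forall>\<omega>\<in>space M. \<exists>!x. x > 0 \<and>
               1 - trn (G (A n \<omega>) z (x\<^sup>2)) = complex_of_real (\<epsilon> / x)) \<and>
            (\<exists>!x. x > 0 \<and> 1 - (\<integral>l. 1 / (l + x\<^sup>2) \<partial>nu z) = \<epsilon> / x) \<and>
            (\<forall>x\<ge>0. (\<integral>l. 1 / (l + x\<^sup>2) \<partial>nu z) \<noteq> 1)) \<and>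
         (\<forall>E. compact E \<and> E \<inter> closure (Dset nu) = {} \<longrightarrow>
            (AE \<omega> in M. \<exists>n0. \<forall>n\<ge>n0. \<forall>z\<in>E. \<forall>x\<ge>(0::real).
               invertible_mat (Y0 (A n \<omega>) z + complex_of_real (x\<^sup>2) \<cdot>\<^sub>m 1\<^sub>m n) \<and>
               trn (G (A n \<omega>) z (x\<^sup>2)) \<noteq> 1))"
proof -
  have P1: "\<forall>z. z \<notin> closure (Dset nu) \<longrightarrow>
            (\<forall>n. \<forall>\<omega>\<in>space M. \<exists>!x. x > 0 \<and>
               1 - trn (G (A n \<omega>) z (x\<^sup>2)) = complex_of_real (\<epsilon> / x)) \<and>
            (\<exists>!x. x > 0 \<and> 1 - (\<integral>l. 1 / (l + x\<^sup>2) \<partial>nu z) = \<epsilon> / x) \<and>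
            (\<forall>x\<ge>0. (\<integral>l. 1 / (l + x\<^sup>2) \<partial>nu z) \<noteq> 1)"
  proof (intro allI impI)
    fix z assume z: "z \<notin> closure (Dset nu)"
    have fp: "\<forall>n. \<forall>\<omega>\<in>space M. \<exists>!x. x > 0 \<and>
               1 - trn (G (A n \<omega>) z (x\<^sup>2)) = complex_of_real (\<epsilon> / x)"
      using finite_part[OF _ eps] carrier by blast
    have zD: "z \<notin> Dset nu" using z closure_subset by blast
    then have "z \<notin> sigma0 nu" unfolding Dset_def by auto
    then obtain e where e: "e > 0" "\<not> 0 < measure (nu z) (ball 0 e)"
      unfolding sigma0_def msupp_def by auto
    then have b0: "measure (nu z) (ball 0 e) = 0"
      using measure_nonneg[of "nu z" "ball 0 e"] by linarith
    have I: "(\<integral>l. 1 / l \<partial>nu z) < 1" using zD \<open>z \<notin> sigma0 nu\<close> unfolding Dset_def by auto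
    have nz: "prob_space (nu z)" "sets (nu z) = sets borel" "emeasure (nu z) {0..} = 1" using nu by auto
    show "(\<forall>n. \<forall>\<omega>\<in>space M. \<exists>!x. x > 0 \<and>
               1 - trn (G (A n \<omega>) z (x\<^sup>2)) = complex_of_real (\<epsilon> / x)) \<and>
            (\<exists>!x. x > 0 \<and> 1 - (\<integral>l. 1 / (l + x\<^sup>2) \<partial>nu z) = \<epsilon> / x) \<and>
            (\<forall>x\<ge>0. (\<integral>l. 1 / (l + x\<^sup>2) \<partial>nu z) \<noteq> 1)"
      using fp nu_part[OF nz e(1) b0 I eps] by blast
  qed
  have P2: "\<forall>E. compact E \<and> E \<inter> closure (Dset nu) = {} \<longrightarrow>
            (AE \<omega> in M. \<exists>n0. \<forall>n\<ge>n0. \<forall>z\<in>E. \<forall>x\<ge>(0::real).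
               invertible_mat (Y0 (A n \<omega>) z + complex_of_real (x\<^sup>2) \<cdot>\<^sub>m 1\<^sub>m n) \<and>
               trn (G (A n \<omega>) z (x\<^sup>2)) \<noteq> 1)"
    using part2[OF M carrier C3] by blast
  show ?thesis using P1 P2 by blast
qed

end
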